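(* Let $\mathbb{F}=\mathbb{F}_p$, $r_1,\dots,r_n\in\mathbb{F}^N$ and $k\in[N]$. Then $$\mathcal{S}^{\{k\}}(r_1,\dots,r_n)=\sum_{\tau\subseteq[n]}(-1)^{|\tau|}\,|\tau|!\; r_\tau(k)\;\mathcal{S}\big(r[[n]\setminus\tau]\big).$$
   Context: For vectors $w_1,\dots,w_L\in\mathbb{F}^N$ and $T\subseteq[N]$, $\mathcal{S}^T(w_1,\dots,w_L)=\sum_\rho\prod_{i=1}^Lw_i(\rho(i))$ over injective maps $\rho:[L]\to[N]\setminus T$ (sum of permanents of all $L\times L$ submatrices avoiding columns in $T$), and $\mathcal{S}=\mathcal{S}^{\emptyset}$. For $\tau\subseteq[n]$, $r_\tau$ is the coordinatewise product $\prod_{i\in\tau}r_i$, with $r_\emptyset$ the all-ones vector; $r[\sigma]$ denotes the list of vectors $r_i$, $i\in\sigma$, and $\mathcal{S}(r[\emptyset])=1$. $r(j)$ is the $j$-th coordinate. *)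

theory Defs
  imports "HOL-Library.FuncSet" "Berlekamp_Zassenhaus.Finite_Field"
begin

text \<open>Vectors in F^N are functions nat => F, coordinates indexed by [N] = {1..N}.
  A family of vectors r_i (i in a finite index set sigma) is given by r :: nat => nat => F.
  permsum N T sigma r = sum over injective rho : sigma -> [N] - T of prod_{i in sigma} r i (rho i),
  i.e. S^T(r[sigma]).\<close>

definition permsum :: "nat \<Rightarrow> nat set \<Rightarrow> nat set \<Rightarrow> (nat \<Rightarrow> nat \<Rightarrow> 'a::comm_ring_1) \<Rightarrow> 'a" where
  "permsum N T \<sigma> r =
     (\<Sum>\<rho> \<in> {\<rho>. \<rho> \<in> \<sigma> \<rightarrow>\<^sub>E ({1..N} - T) \<and> inj_on \<rho> \<sigma>}. \<Prod>i\<in>\<sigma>. r i (\<rho> i))"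

definition rprod :: "(nat \<Rightarrow> nat \<Rightarrow> 'a::comm_ring_1) \<Rightarrow> nat set \<Rightarrow> nat \<Rightarrow> 'a" where
  "rprod r \<tau> j = (\<Prod>i\<in>\<tau>. r i j)"

end

theory Submission
  imports Defs
begin

definition MM :: "nat \<Rightarrow> nat set \<Rightarrow> nat set \<Rightarrow> (nat \<Rightarrow> nat) set" where
  "MM N T \<sigma> = {\<rho>. \<rho> \<in> \<sigma> \<rightarrow>\<^sub>E ({1..N} - T) \<and> inj_on \<rho> \<sigma>}"

lemma permsum_MM: "permsum N T \<sigma> r = (\<Sum>\<rho>\<in>MM N T \<sigma>. \<Prod>i\<in>\<sigma>. r i (\<rho> i))"
  unfolding permsum_def MM_def by simp

lemma finite_MM: "finite \<sigma> \<Longrightarrow> finite (MM N T \<sigma>)"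
  unfolding MM_def
  by (rule finite_subset[OF _ finite_PiE[of \<sigma> "\<lambda>_. {1..N} - T"]]) auto

lemma fiber_MM:
  assumes "i \<in> \<sigma>" "k \<in> {1..N}"
  shows "{\<rho>\<in>MM N {} \<sigma>. \<rho> i = k} = (\<lambda>\<rho>'. \<rho>'(i:=k)) ` MM N {k} (\<sigma>-{i})"
proof
  show "{\<rho>\<in>MM N {} \<sigma>. \<rho> i = k} \<subseteq> (\<lambda>\<rho>'. \<rho>'(i:=k)) ` MM N {k} (\<sigma>-{i})"
  proof
    fix \<rho> assume h: "\<rho> \<in> {\<rho>\<in>MM N {} \<sigma>. \<rho> i = k}"
    then have r1: "\<rho> \<in> \<sigma> \<rightarrow>\<^sub>E {1..N}" and r2: "inj_on \<rho> \<sigma>" and r3: "\<rho> i = k"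
      unfolding MM_def by auto
    define \<rho>' where "\<rho>' = \<rho>(i:=undefined)"
    have "\<rho> = \<rho>'(i:=k)" using r3 unfolding \<rho>'_def by auto
    moreover have "\<rho>' \<in> (\<sigma>-{i}) \<rightarrow>\<^sub>E ({1..N} - {k})"
    proof (rule PiE_I)
      fix j assume j: "j \<in> \<sigma>-{i}"
      then have "\<rho> j \<noteq> \<rho> i" using r2 assms(1) unfolding inj_on_def by blast
      then show "\<rho>' j \<in> {1..N} - {k}" using j r1 r3 unfolding \<rho>'_def by auto
    next
      fix j assume "j \<notin> \<sigma>-{i}"
      then show "\<rho>' j = undefined" using r1 unfolding \<rho>'_def by (cases "j = i") auto
    qed
    moreover have "inj_on \<rho>' (\<sigma>-{i})" using r2 unfolding \<rho>'_def inj_on_def by auto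
    ultimately show "\<rho> \<in> (\<lambda>\<rho>'. \<rho>'(i:=k)) ` MM N {k} (\<sigma>-{i})"
      unfolding MM_def by blast
  qed
next
  show "(\<lambda>\<rho>'. \<rho>'(i:=k)) ` MM N {k} (\<sigma>-{i}) \<subseteq> {\<rho>\<in>MM N {} \<sigma>. \<rho> i = k}"
  proof
    fix x assume "x \<in> (\<lambda>\<rho>'. \<rho>'(i:=k)) ` MM N {k} (\<sigma>-{i})"
    then obtain \<rho>' where x: "x = \<rho>'(i:=k)" and r1: "\<rho>' \<in> (\<sigma>-{i}) \<rightarrow>\<^sub>E ({1..N} - {k})"
      and r2: "inj_on \<rho>' (\<sigma>-{i})" unfolding MM_def by blast
    have a1: "\<rho>' j \<in> {1..N} - {k}" if "j \<in> \<sigma>-{i}" for j using r1 that by (rule PiE_mem)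
    have a2: "\<rho>' j = undefined" if "j \<notin> \<sigma>-{i}" for j using r1 that by (rule PiE_arb)
    have "x \<in> \<sigma> \<rightarrow>\<^sub>E ({1..N} - {})"
    proof (rule PiE_I)
      fix j assume "j \<in> \<sigma>" then show "x j \<in> {1..N} - {}" using a1[of j] assms(2) x by (cases "j = i") auto
    next
      fix j assume "j \<notin> \<sigma>" then show "x j = undefined" using a2[of j] assms(1) x by auto
    qed
    moreover have "inj_on x \<sigma>"
    proof -
      have "\<sigma> = insert i (\<sigma>-{i})" using assms(1) by auto
      moreover have "inj_on x (insert i (\<sigma>-{i}))"
        unfolding x using a1 r2 by (auto simp: inj_on_def)
      ultimately show ?thesis by simp
    qed
    ultimately show "x \<in> {\<rho>\<in>MM N {} \<sigma>. \<rho> i = k}" using x unfolding MM_def by auto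
  qed
qed

lemma inj_upd_MM: "inj_on (\<lambda>\<rho>'. \<rho>'(i:=k)) (MM N {k} (\<sigma>-{i}))"
proof (rule inj_onI)
  fix a b assume a: "a \<in> MM N {k} (\<sigma>-{i})" and b: "b \<in> MM N {k} (\<sigma>-{i})"
    and e: "a(i:=k) = b(i:=k)"
  have "a i = undefined" "b i = undefined" using a b unfolding MM_def by (auto intro: PiE_arb)
  then have "a i = b i" by simp
  then show "a = b" using e by (metis fun_upd_triv fun_upd_upd)
qed

lemma recA:
  assumes fin: "finite \<sigma>" and k: "k \<in> {1..N}"
  shows "permsum N {} \<sigma> r = permsum N {k} \<sigma> r
           + (\<Sum>i\<in>\<sigma>. r i k * permsum N {k} (\<sigma>-{i}) r)"
proof -
  define P where "P \<rho> = (\<Prod>i\<in>\<sigma>. r i (\<rho> i))" for \<rho>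
  have split: "P \<rho> = (if k \<notin> \<rho> ` \<sigma> then P \<rho> else 0) + (\<Sum>i\<in>\<sigma>. if \<rho> i = k then P \<rho> else 0)"
    if "\<rho> \<in> MM N {} \<sigma>" for \<rho>
  proof (cases "k \<in> \<rho> ` \<sigma>")
    case True
    then obtain i0 where i0: "i0 \<in> \<sigma>" "\<rho> i0 = k" by auto
    have inj: "inj_on \<rho> \<sigma>" using that unfolding MM_def by auto
    have "{i\<in>\<sigma>. \<rho> i = k} = {i0}" using i0 inj unfolding inj_on_def by auto
    then have "(\<Sum>i\<in>\<sigma>. if \<rho> i = k then P \<rho> else 0) = P \<rho>"
      using fin by (simp add: sum.inter_filter[symmetric])
    then show ?thesis using True by simp
  next
    case False
    then have "\<forall>i\<in>\<sigma>. \<rho> i \<noteq> k" by auto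
    then show ?thesis using False by simp
  qed
  have "permsum N {} \<sigma> r = (\<Sum>\<rho>\<in>MM N {} \<sigma>. P \<rho>)" unfolding permsum_MM P_def ..
  also have "\<dots> = (\<Sum>\<rho>\<in>MM N {} \<sigma>. (if k \<notin> \<rho> ` \<sigma> then P \<rho> else 0))
      + (\<Sum>\<rho>\<in>MM N {} \<sigma>. \<Sum>i\<in>\<sigma>. if \<rho> i = k then P \<rho> else 0)"
    by (subst sum.distrib[symmetric]) (rule sum.cong[OF refl], erule split)
  also have "(\<Sum>\<rho>\<in>MM N {} \<sigma>. (if k \<notin> \<rho> ` \<sigma> then P \<rho> else 0)) = permsum N {k} \<sigma> r"
  proof -
    have "{\<rho>\<in>MM N {} \<sigma>. k \<notin> \<rho> ` \<sigma>} = MM N {k} \<sigma>"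
      unfolding MM_def PiE_def by (auto simp: Pi_def)
    then show ?thesis using finite_MM[OF fin]
      by (simp add: sum.inter_filter[symmetric] permsum_MM P_def)
  qed
  also have "(\<Sum>\<rho>\<in>MM N {} \<sigma>. \<Sum>i\<in>\<sigma>. if \<rho> i = k then P \<rho> else 0)
       = (\<Sum>i\<in>\<sigma>. \<Sum>\<rho>\<in>MM N {} \<sigma>. if \<rho> i = k then P \<rho> else 0)"
    by (rule sum.swap)
  also have "\<dots> = (\<Sum>i\<in>\<sigma>. r i k * permsum N {k} (\<sigma>-{i}) r)"
  proof (rule sum.cong[OF refl])
    fix i assume i: "i \<in> \<sigma>"
    have "(\<Sum>\<rho>\<in>MM N {} \<sigma>. if \<rho> i = k then P \<rho> else 0) = (\<Sum>\<rho>\<in>{\<rho>\<in>MM N {} \<sigma>. \<rho> i = k}. P \<rho>)"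
      using finite_MM[OF fin] by (simp add: sum.inter_filter)
    also have "\<dots> = (\<Sum>\<rho>'\<in>MM N {k} (\<sigma>-{i}). P (\<rho>'(i:=k)))"
      unfolding fiber_MM[OF i k] by (rule sum.reindex[OF inj_upd_MM, unfolded comp_def])
    also have "\<dots> = (\<Sum>\<rho>'\<in>MM N {k} (\<sigma>-{i}). r i k * (\<Prod>j\<in>\<sigma>-{i}. r j (\<rho>' j)))"
    proof (rule sum.cong[OF refl])
      fix \<rho>' show "P (\<rho>'(i:=k)) = r i k * (\<Prod>j\<in>\<sigma>-{i}. r j (\<rho>' j))"
      proof -
        have "(\<Prod>j\<in>\<sigma>-{i}. r j ((\<rho>'(i:=k)) j)) = (\<Prod>j\<in>\<sigma>-{i}. r j (\<rho>' j))"
          by (rule prod.cong) auto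
        then show ?thesis
          unfolding P_def using prod.remove[OF fin i, of "\<lambda>j. r j ((\<rho>'(i:=k)) j)"] by simp
      qed
    qed
    also have "\<dots> = r i k * permsum N {k} (\<sigma>-{i}) r"
      by (simp add: permsum_MM sum_distrib_left)
    finally show "(\<Sum>\<rho>\<in>MM N {} \<sigma>. if \<rho> i = k then P \<rho> else 0) = r i k * permsum N {k} (\<sigma>-{i}) r" .
  qed
  finally show ?thesis .
qed


lemma coef_id:
  assumes "m \<ge> 1"
  shows "(of_nat m :: 'a::comm_ring_1) * ((-1) ^ (m - 1) * of_nat (fact (m - 1)))
       = - ((-1) ^ m * of_nat (fact m))"
proof -
  obtain j where m: "m = Suc j" using assms by (cases m) auto
  show ?thesis unfolding m by (simp add: algebra_simps)
qed

lemma main_gen: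
  fixes r :: "nat \<Rightarrow> nat \<Rightarrow> 'a::comm_ring_1"
  assumes "finite \<sigma>" and k: "k \<in> {1..N}"
  shows "permsum N {k} \<sigma> r = (\<Sum>\<tau> \<in> Pow \<sigma>. (-1) ^ card \<tau> * of_nat (fact (card \<tau>)) * rprod r \<tau> k
        * permsum N {} (\<sigma> - \<tau>) r)"
  using assms(1)
proof (induction \<sigma> rule: finite_psubset_induct)
  case (psubset \<sigma>)
  note fin = psubset.hyps(1)
  define S where "S A = permsum N {} A r" for A
  define g where "g \<tau> = (-1) ^ (card \<tau> - 1) * of_nat (fact (card \<tau> - 1)) * rprod r \<tau> k * S (\<sigma> - \<tau>)" for \<tau>
  have step: "r i k * permsum N {k} (\<sigma>-{i}) r = (\<Sum>\<tau>\<in>Pow \<sigma>. if i \<in> \<tau> then g \<tau> else 0)"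
    if i: "i \<in> \<sigma>" for i
  proof -
    have fin': "finite (\<sigma>-{i})" using fin by simp
    have "permsum N {k} (\<sigma>-{i}) r = (\<Sum>\<tau> \<in> Pow (\<sigma>-{i}). (-1) ^ card \<tau> * of_nat (fact (card \<tau>)) * rprod r \<tau> k
        * permsum N {} ((\<sigma>-{i}) - \<tau>) r)"
      using psubset.IH[of "\<sigma>-{i}"] i by blast
    then have "r i k * permsum N {k} (\<sigma>-{i}) r = (\<Sum>\<tau> \<in> Pow (\<sigma>-{i}). r i k * ((-1) ^ card \<tau> * of_nat (fact (card \<tau>)) * rprod r \<tau> k
        * permsum N {} ((\<sigma>-{i}) - \<tau>) r))"
      by (simp only: sum_distrib_left)
    also have "\<dots> = (\<Sum>\<tau> \<in> Pow (\<sigma>-{i}). g (insert i \<tau>))"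
    proof (rule sum.cong[OF refl])
      fix \<tau> assume t: "\<tau> \<in> Pow (\<sigma>-{i})"
      then have ft: "finite \<tau>" using fin' finite_subset by auto
      have it: "i \<notin> \<tau>" using t by auto
      have c: "card (insert i \<tau>) - 1 = card \<tau>" using ft it by simp
      have rp: "rprod r (insert i \<tau>) k = r i k * rprod r \<tau> k"
        unfolding rprod_def using ft it by simp
      have d: "\<sigma> - insert i \<tau> = (\<sigma>-{i}) - \<tau>" by auto
      show "r i k * ((-1) ^ card \<tau> * of_nat (fact (card \<tau>)) * rprod r \<tau> k * permsum N {} ((\<sigma>-{i}) - \<tau>) r)
            = g (insert i \<tau>)"
        unfolding g_def c rp d S_def by (simp add: algebra_simps)
    qed
    also have "\<dots> = (\<Sum>\<tau>\<in>insert i ` Pow (\<sigma>-{i}). g \<tau>)"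
    proof (rule sum.reindex[symmetric, unfolded comp_def])
      show "inj_on (insert i) (Pow (\<sigma>-{i}))" unfolding inj_on_def by blast
    qed
    also have "insert i ` Pow (\<sigma>-{i}) = {\<tau>\<in>Pow \<sigma>. i \<in> \<tau>}"
    proof
      show "insert i ` Pow (\<sigma>-{i}) \<subseteq> {\<tau>\<in>Pow \<sigma>. i \<in> \<tau>}" using i by auto
      show "{\<tau>\<in>Pow \<sigma>. i \<in> \<tau>} \<subseteq> insert i ` Pow (\<sigma>-{i})"
      proof
        fix \<tau> assume "\<tau> \<in> {\<tau>\<in>Pow \<sigma>. i \<in> \<tau>}"
        then have "\<tau> = insert i (\<tau>-{i})" "\<tau>-{i} \<in> Pow (\<sigma>-{i})" by auto
        then show "\<tau> \<in> insert i ` Pow (\<sigma>-{i})" by blast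
      qed
    qed
    also have "(\<Sum>\<tau>\<in>{\<tau>\<in>Pow \<sigma>. i \<in> \<tau>}. g \<tau>) = (\<Sum>\<tau>\<in>Pow \<sigma>. if i \<in> \<tau> then g \<tau> else 0)"
      by (rule sum.inter_filter[of "Pow \<sigma>" g "\<lambda>\<tau>. i \<in> \<tau>"]) (use fin in simp)
    finally show ?thesis .
  qed
  have "permsum N {k} \<sigma> r = S \<sigma> - (\<Sum>i\<in>\<sigma>. r i k * permsum N {k} (\<sigma>-{i}) r)"
    using recA[OF fin k, of r] unfolding S_def by (simp add: algebra_simps)
  also have "(\<Sum>i\<in>\<sigma>. r i k * permsum N {k} (\<sigma>-{i}) r) = (\<Sum>i\<in>\<sigma>. \<Sum>\<tau>\<in>Pow \<sigma>. if i \<in> \<tau> then g \<tau> else 0)"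
    using step by (rule sum.cong[OF refl])
  also have "\<dots> = (\<Sum>\<tau>\<in>Pow \<sigma>. \<Sum>i\<in>\<sigma>. if i \<in> \<tau> then g \<tau> else 0)"
    by (rule sum.swap)
  also have "\<dots> = (\<Sum>\<tau>\<in>Pow \<sigma>. of_nat (card \<tau>) * g \<tau>)"
  proof (rule sum.cong[OF refl])
    fix \<tau> assume t: "\<tau> \<in> Pow \<sigma>"
    have "{i\<in>\<sigma>. i \<in> \<tau>} = \<tau>" using t by auto
    then show "(\<Sum>i\<in>\<sigma>. if i \<in> \<tau> then g \<tau> else 0) = of_nat (card \<tau>) * g \<tau>"
      using fin by (simp add: sum.inter_filter[symmetric])
  qed
  finally have A: "permsum N {k} \<sigma> r = S \<sigma> - (\<Sum>\<tau>\<in>Pow \<sigma>. of_nat (card \<tau>) * g \<tau>)" .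
  have B: "(-1) ^ card \<tau> * of_nat (fact (card \<tau>)) * rprod r \<tau> k * permsum N {} (\<sigma> - \<tau>) r
      = (if \<tau> = {} then S \<sigma> else 0) - of_nat (card \<tau>) * g \<tau>" if t: "\<tau> \<in> Pow \<sigma>" for \<tau>
  proof (cases "\<tau> = {}")
    case True then show ?thesis by (simp add: S_def rprod_def)
  next
    case False
    have ft: "finite \<tau>" using t fin finite_subset by auto
    then have "card \<tau> \<ge> 1" using False by (simp add: Suc_le_eq card_gt_0_iff)
    from coef_id[OF this, where 'a='a]
    have e: "of_nat (card \<tau>) * ((-1) ^ (card \<tau> - 1) * of_nat (fact (card \<tau> - 1)))
       = - ((-1) ^ card \<tau> * of_nat (fact (card \<tau>)) :: 'a)" .
    have "of_nat (card \<tau>) * g \<tau> = (of_nat (card \<tau>) * ((-1) ^ (card \<tau> - 1) * of_nat (fact (card \<tau> - 1))))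
         * (rprod r \<tau> k * S (\<sigma> - \<tau>))" unfolding g_def by (simp add: algebra_simps)
    also have "\<dots> = - ((-1) ^ card \<tau> * of_nat (fact (card \<tau>)) * rprod r \<tau> k * permsum N {} (\<sigma> - \<tau>) r)"
      unfolding e S_def by (simp add: algebra_simps)
    finally show ?thesis using False by simp
  qed
  have "(\<Sum>\<tau> \<in> Pow \<sigma>. (-1) ^ card \<tau> * of_nat (fact (card \<tau>)) * rprod r \<tau> k * permsum N {} (\<sigma> - \<tau>) r)
     = (\<Sum>\<tau> \<in> Pow \<sigma>. (if \<tau> = {} then S \<sigma> else 0) - of_nat (card \<tau>) * g \<tau>)"
    using B by (rule sum.cong[OF refl])
  also have "\<dots> = S \<sigma> - (\<Sum>\<tau>\<in>Pow \<sigma>. of_nat (card \<tau>) * g \<tau>)"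
    using fin by (simp add: sum_subtractf)
  finally show ?case using A by simp
qed

theorem lemma2p5:
  fixes r :: "nat \<Rightarrow> nat \<Rightarrow> 'p::prime_card mod_ring"
    and n N k :: nat
  assumes "k \<in> {1..N}"
  shows "permsum N {k} {1..n} r =
    (\<Sum>\<tau> \<in> Pow {1..n}. (-1) ^ card \<tau> * of_nat (fact (card \<tau>)) * rprod r \<tau> k
        * permsum N {} ({1..n} - \<tau>) r)"
  by (rule main_gen[OF finite_atLeastAtMost assms])

end
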